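(* Every three-dimensional empirical copula is simplified.
   Context: $\mathbb{I}=[0,1]$, $\lambda$ Lebesgue measure; points of $\mathbb{I}^3$ are written $(\mathbf{u},v)$, $\mathbf{u}=(u_1,u_2)$. The (three-dimensional) empirical copula of a sample $(\mathbf{X}_1,Y_1),\dots,(\mathbf{X}_n,Y_n)$ of a random vector with continuous univariate marginals and without ties is the copula obtained by trilinear interpolation of the empirical subcopula; equivalently, there are permutations $\sigma_1,\sigma_2$ of $\{1,\dots,n\}$ such that its density is $\hat c_n(u_1,u_2,v)=n^2\sum_{i=1}^n\mathbf{1}_{I_i^1}(u_1)\mathbf{1}_{I_i^2}(u_2)\mathbf{1}_{V_i}(v)$ with $I_i^k=((\sigma_k(i)-1)/n,\sigma_k(i)/n]$ and $V_i=((i-1)/n,i/n]$. For a three-dimensional copula $C$, its Markov kernel $K_C$ is (a version of) the regular conditional distribution of $(U_1,U_2)$ given $U_3=v$, $(U_1,U_2,U_3)\sim C$, and $F_{1|3}(u_1|t)=K_C(t,[0,u_1]\times\mathbb{I})$, $F_{2|3}(u_2|t)=K_C(t,\mathbb{I}\times[0,u_2])$. $C$ is generalized simplified if there is a bivariate copula $A$ with $C(\mathbf{u},v)=\int_{[0,v]}A(F_{1|3}(u_1|t),F_{2|3}(u_2|t))\,d\lambda(t)$ for all $(\mathbf{u},v)$; $C$ is simplified if it is generalized simplified and, for $\lambda$-a.e. $t$, the functions $F_{1|3}(\cdot|t)$ and $F_{2|3}(\cdot|t)$ are continuous. *)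

theory Defs
  imports "HOL-Probability.Probability"
begin

definition copula2 :: "(real \<Rightarrow> real \<Rightarrow> real) \<Rightarrow> bool" where
  "copula2 A \<longleftrightarrow>
     (\<forall>u\<in>{0..1}. A u 0 = 0 \<and> A 0 u = 0 \<and> A u 1 = u \<and> A 1 u = u) \<and>
     (\<forall>u1\<in>{0..1}. \<forall>u2\<in>{0..1}. \<forall>v1\<in>{0..1}. \<forall>v2\<in>{0..1}.
        u1 \<le> u2 \<longrightarrow> v1 \<le> v2 \<longrightarrow> A u2 v2 - A u1 v2 - A u2 v1 + A u1 v1 \<ge> 0)"

text \<open>Density of the three-dimensional empirical copula given the rank permutations.\<close>
definition emp_density ::
  "nat \<Rightarrow> (nat \<Rightarrow> nat) \<Rightarrow> (nat \<Rightarrow> nat) \<Rightarrow> real \<Rightarrow> real \<Rightarrow> real \<Rightarrow> real" where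
  "emp_density n s1 s2 u1 u2 v =
     real n ^ 2 * (\<Sum>i\<in>{1..n}.
        indicator {(real (s1 i) - 1) / real n <.. real (s1 i) / real n} u1 *
        indicator {(real (s2 i) - 1) / real n <.. real (s2 i) / real n} u2 *
        indicator {(real i - 1) / real n <.. real i / real n} v)"

definition emp_copula ::
  "nat \<Rightarrow> (nat \<Rightarrow> nat) \<Rightarrow> (nat \<Rightarrow> nat) \<Rightarrow> real \<Rightarrow> real \<Rightarrow> real \<Rightarrow> real" where
  "emp_copula n s1 s2 u1 u2 v =
     set_lebesgue_integral lborel ({0..u1} \<times> {0..u2} \<times> {0..v})
       (\<lambda>x::real \<times> real \<times> real. emp_density n s1 s2 (fst x) (fst (snd x)) (snd (snd x)))"

text \<open>K is (a version of) the Markov kernel of the 3-copula C: a measurable family of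
  probability measures on the plane, regular conditional distribution of (U1,U2) given U3=t.\<close>
definition markov_kernel3 ::
  "(real \<Rightarrow> real \<Rightarrow> real \<Rightarrow> real) \<Rightarrow> (real \<Rightarrow> (real \<times> real) measure) \<Rightarrow> bool" where
  "markov_kernel3 C K \<longleftrightarrow>
     (\<forall>t. prob_space (K t) \<and> sets (K t) = sets (borel :: (real \<times> real) measure)) \<and>
     (\<forall>B\<in>sets (borel :: (real \<times> real) measure). (\<lambda>t. measure (K t) B) \<in> borel_measurable borel) \<and>
     (\<forall>u1\<in>{0..1}. \<forall>u2\<in>{0..1}. \<forall>v\<in>{0..1}.
        C u1 u2 v = set_lebesgue_integral lborel {0..v} (\<lambda>t. measure (K t) ({0..u1} \<times> {0..u2})))"

definition cond_df13 :: "(real \<Rightarrow> (real \<times> real) measure) \<Rightarrow> real \<Rightarrow> real \<Rightarrow> real" where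
  "cond_df13 K u1 t = measure (K t) ({0..u1} \<times> {0..1})"

definition cond_df23 :: "(real \<Rightarrow> (real \<times> real) measure) \<Rightarrow> real \<Rightarrow> real \<Rightarrow> real" where
  "cond_df23 K u2 t = measure (K t) ({0..1} \<times> {0..u2})"

definition gen_simplified_wrt ::
  "(real \<Rightarrow> real \<Rightarrow> real \<Rightarrow> real) \<Rightarrow> (real \<Rightarrow> (real \<times> real) measure) \<Rightarrow> bool" where
  "gen_simplified_wrt C K \<longleftrightarrow>
     (\<exists>A. copula2 A \<and>
        (\<forall>u1\<in>{0..1}. \<forall>u2\<in>{0..1}. \<forall>v\<in>{0..1}.
           C u1 u2 v = set_lebesgue_integral lborel {0..v}
                          (\<lambda>t. A (cond_df13 K u1 t) (cond_df23 K u2 t))))"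

definition simplified3 :: "(real \<Rightarrow> real \<Rightarrow> real \<Rightarrow> real) \<Rightarrow> bool" where
  "simplified3 C \<longleftrightarrow>
     (\<exists>K. markov_kernel3 C K \<and> gen_simplified_wrt C K \<and>
        (AE t in lborel. t \<in> {0..1} \<longrightarrow>
           continuous_on {0..1} (\<lambda>u. cond_df13 K u t) \<and>
           continuous_on {0..1} (\<lambda>u. cond_df23 K u t)))"

end

theory Submission
  imports Defs
begin

definition Iv :: "nat \<Rightarrow> nat \<Rightarrow> real set" where
  "Iv n k = {(real k - 1) / real n <.. real k / real n}"

lemma emeasure_lborel_Times:
  fixes A :: "'a::euclidean_space set" and B :: "'b::euclidean_space set"
  assumes "A \<in> sets borel" "B \<in> sets borel"
  shows "emeasure lborel (A \<times> B) = emeasure lborel A * emeasure lborel B"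
proof -
  have "emeasure (lborel \<Otimes>\<^sub>M lborel) (A \<times> B) = emeasure lborel A * emeasure lborel B"
    by (rule lborel.emeasure_pair_measure_Times) (use assms in auto)
  then show ?thesis by (simp add: lborel_prod)
qed

lemma measure_lborel_Times:
  fixes A :: "'a::euclidean_space set" and B :: "'b::euclidean_space set"
  assumes "A \<in> sets borel" "B \<in> sets borel"
  shows "measure lborel (A \<times> B) = measure lborel A * measure lborel B"
  using emeasure_lborel_Times[OF assms] by (simp add: measure_def enn2real_mult)

lemma len:
  assumes "1 \<le> k" "n \<ge> 1" "0 \<le> u"
  shows "measure lborel ({0..u} \<inter> Iv n k) = max 0 (min u (real k / real n) - (real k - 1) / real n)"
proof -
  have a: "0 \<le> (real k - 1) / real n" using assms by simp
  have "{0..u} \<inter> Iv n k = {(real k - 1) / real n <.. min u (real k / real n)}"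
    using a unfolding Iv_def by auto
  then show ?thesis
    by (cases "(real k - 1) / real n \<le> min u (real k / real n)") (auto simp: measure_def)
qed

lemma Iv_sets[measurable]: "Iv n k \<in> sets borel" unfolding Iv_def by simp

lemma jj_meas: "(\<lambda>t::real. min n (max 1 (nat \<lceil>real n * t\<rceil>))) \<in> borel \<rightarrow>\<^sub>M count_space UNIV"
  by measurable


definition LL :: "nat \<Rightarrow> nat \<Rightarrow> real \<Rightarrow> real" where
  "LL n k u = measure lborel ({0..u} \<inter> Iv n k)"

definition bx :: "nat \<Rightarrow> (nat \<Rightarrow> nat) \<Rightarrow> (nat \<Rightarrow> nat) \<Rightarrow> nat \<Rightarrow> (real \<times> real) set" where
  "bx n s1 s2 i = Iv n (s1 i) \<times> Iv n (s2 i)"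

definition Kd :: "nat \<Rightarrow> (nat \<Rightarrow> nat) \<Rightarrow> (nat \<Rightarrow> nat) \<Rightarrow> nat \<Rightarrow> (real \<times> real) measure" where
  "Kd n s1 s2 i = uniform_measure lborel (bx n s1 s2 i)"

definition jj :: "nat \<Rightarrow> real \<Rightarrow> nat" where
  "jj n t = min n (max 1 (nat \<lceil>real n * t\<rceil>))"

definition KK :: "nat \<Rightarrow> (nat \<Rightarrow> nat) \<Rightarrow> (nat \<Rightarrow> nat) \<Rightarrow> real \<Rightarrow> (real \<times> real) measure" where
  "KK n s1 s2 t = Kd n s1 s2 (jj n t)"

lemma jj_meas'[measurable]: "jj n \<in> borel \<rightarrow>\<^sub>M count_space UNIV"
  unfolding jj_def[abs_def] by measurable

lemma emeasure_Iv: "n \<ge> 1 \<Longrightarrow> emeasure lborel (Iv n k) = ennreal (1 / real n)"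
  unfolding Iv_def by (simp add: diff_divide_distrib)

lemma emeasure_bx: "n \<ge> 1 \<Longrightarrow> emeasure lborel (bx n s1 s2 i) = ennreal (1 / real n ^ 2)"
  unfolding bx_def by (simp add: emeasure_lborel_Times emeasure_Iv ennreal_mult'[symmetric] power2_eq_square)

lemma prob_Kd: "n \<ge> 1 \<Longrightarrow> prob_space (Kd n s1 s2 i)"
  unfolding Kd_def by (rule prob_space_uniform_measure) (auto simp: emeasure_bx)

lemma measure_Kd:
  assumes "n \<ge> 1"
  shows "measure (Kd n s1 s2 i) ({0..u1} \<times> {0..u2}) = real n ^ 2 * LL n (s1 i) u1 * LL n (s2 i) u2"
proof -
  have "measure (Kd n s1 s2 i) ({0..u1} \<times> {0..u2})
      = measure lborel (bx n s1 s2 i \<inter> ({0..u1} \<times> {0..u2})) / measure lborel (bx n s1 s2 i)"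
    unfolding Kd_def using assms by (subst measure_uniform_measure) (auto simp: emeasure_bx intro!: borel_closed closed_Times)
  also have "bx n s1 s2 i \<inter> ({0..u1} \<times> {0..u2}) = ({0..u1} \<inter> Iv n (s1 i)) \<times> ({0..u2} \<inter> Iv n (s2 i))"
    unfolding bx_def by auto
  also have "measure lborel \<dots> = LL n (s1 i) u1 * LL n (s2 i) u2"
    unfolding LL_def by (rule measure_lborel_Times) auto
  also have "measure lborel (bx n s1 s2 i) = 1 / real n ^ 2"
    using emeasure_bx[OF assms] by (simp add: measure_def)
  finally show ?thesis by simp
qed

lemma LL_1: "1 \<le> k \<Longrightarrow> k \<le> n \<Longrightarrow> LL n k 1 = 1 / real n"
  unfolding LL_def by (subst len) (auto simp: diff_divide_distrib divide_le_eq_1)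

lemma jj_range: "n \<ge> 1 \<Longrightarrow> jj n t \<in> {1..n}"
  unfolding jj_def by auto

lemma jj_Iv:
  assumes "n \<ge> 1" "i \<in> {1..n}" "t \<in> Iv n i"
  shows "jj n t = i"
proof -
  have "real i - 1 < real n * t" "real n * t \<le> real i"
    using assms by (auto simp: Iv_def field_simps)
  then have "\<lceil>real n * t\<rceil> = int i"
    by (subst ceiling_unique) auto
  then show ?thesis using assms unfolding jj_def by auto
qed

lemma in_Iv_jj:
  assumes "n \<ge> 1" "0 < t" "t \<le> 1"
  shows "t \<in> Iv n (jj n t)"
proof -
  have c: "\<lceil>real n * t\<rceil> \<ge> 1" using assms by auto
  have c2: "\<lceil>real n * t\<rceil> \<le> int n" using assms
    by (metis ceiling_le_iff mult_left_le of_int_of_nat_eq of_nat_0_le_iff)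
  have d1: "1 \<le> nat \<lceil>real n * t\<rceil>" using c by linarith
  have d2: "nat \<lceil>real n * t\<rceil> \<le> n" using c2 by linarith
  have "jj n t = nat \<lceil>real n * t\<rceil>" unfolding jj_def using d1 d2 by (metis max.absorb2 min.absorb2)
  moreover have "real (nat \<lceil>real n * t\<rceil>) = of_int \<lceil>real n * t\<rceil>" using c by simp
  ultimately have r: "real (jj n t) = of_int \<lceil>real n * t\<rceil>" by simp
  have e: "of_int \<lceil>real n * t\<rceil> - 1 < real n * t" "real n * t \<le> of_int \<lceil>real n * t\<rceil>"
    using ceiling_correct by auto
  have np: "real n > 0" using assms by simp
  show ?thesis unfolding Iv_def r using e np
    by (auto simp: field_simps)
qed


lemma Iv_bounded: "bounded (Iv n k)" unfolding Iv_def by simp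

lemma KK_meas: "(\<lambda>t. measure (KK n s1 s2 t) B) \<in> borel_measurable borel"
proof -
  have "(\<lambda>k. measure (Kd n s1 s2 k) B) \<in> count_space UNIV \<rightarrow>\<^sub>M borel" by simp
  from measurable_compose[OF jj_meas' this] show ?thesis by (simp add: KK_def o_def)
qed

lemma sum_ind_Iv:
  assumes "n \<ge> 1" "0 < t" "t \<le> 1"
  shows "(\<Sum>i\<in>{1..n}. c i * indicator (Iv n i) t) = (c (jj n t) :: real)"
proof -
  have "(\<Sum>i\<in>{1..n}. c i * indicator (Iv n i) t) = (\<Sum>i\<in>{1..n}. if i = jj n t then c i else 0)"
  proof (rule sum.cong)
    fix i assume i: "i \<in> {1..n}"
    show "c i * indicator (Iv n i) t = (if i = jj n t then c i else 0)"
    proof (cases "i = jj n t")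
      case True then show ?thesis using in_Iv_jj[OF assms] by simp
    next
      case False then have "t \<notin> Iv n i" using jj_Iv[OF assms(1) i] by auto
      then show ?thesis using False by simp
    qed
  qed simp
  also have "\<dots> = c (jj n t)" using jj_range[OF assms(1)] by simp
  finally show ?thesis .
qed

lemma RC:
  assumes "n \<ge> 1" "0 \<le> v" "v \<le> 1"
  shows "(LINT t:{0..v}|lborel. measure (KK n s1 s2 t) ({0..u1} \<times> {0..u2}))
       = (\<Sum>i\<in>{1..n}. real n ^ 2 * LL n (s1 i) u1 * LL n (s2 i) u2 * LL n i v)"
proof -
  define c where "c i = real n ^ 2 * LL n (s1 i) u1 * LL n (s2 i) u2" for i
  have "(LINT t:{0..v}|lborel. measure (KK n s1 s2 t) ({0..u1} \<times> {0..u2}))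
      = (LINT t:{0..v}|lborel. (\<Sum>i\<in>{1..n}. c i * indicator (Iv n i) t))"
  proof (rule set_lebesgue_integral_cong_AE)
    show "(\<lambda>t. measure (KK n s1 s2 t) ({0..u1} \<times> {0..u2})) \<in> borel_measurable lborel"
      using KK_meas by simp
    show "(\<lambda>t. \<Sum>i\<in>{1..n}. c i * indicator (Iv n i) t) \<in> borel_measurable lborel"
      by measurable
    show "AE t\<in>{0..v} in lborel. measure (KK n s1 s2 t) ({0..u1} \<times> {0..u2}) =
          (\<Sum>i\<in>{1..n}. c i * indicator (Iv n i) t)"
      using AE_lborel_singleton[of 0]
    proof (rule eventually_mono)
      fix t :: real assume t: "t \<noteq> 0"
      show "t \<in> {0..v} \<longrightarrow> measure (KK n s1 s2 t) ({0..u1} \<times> {0..u2}) =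
          (\<Sum>i\<in>{1..n}. c i * indicator (Iv n i) t)"
      proof
        assume "t \<in> {0..v}"
        then have "0 < t" "t \<le> 1" using t assms by auto
        then show "measure (KK n s1 s2 t) ({0..u1} \<times> {0..u2}) = (\<Sum>i\<in>{1..n}. c i * indicator (Iv n i) t)"
          using sum_ind_Iv[OF assms(1)] measure_Kd[OF assms(1)] by (simp add: KK_def c_def)
      qed
    qed
  qed simp
  also have "\<dots> = (LINT t|lborel. (\<Sum>i\<in>{1..n}. c i * indicator ({0..v} \<inter> Iv n i) t))"
    unfolding set_lebesgue_integral_def
    by (intro Bochner_Integration.integral_cong refl)
      (unfold real_scaleR_def sum_distrib_left indicator_inter_arith, rule sum.cong, simp_all add: mult_ac)
  also have "\<dots> = (\<Sum>i\<in>{1..n}. (LINT t|lborel. c i * indicator ({0..v} \<inter> Iv n i) t))"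
  proof (rule Bochner_Integration.integral_sum)
    show "integrable lborel (\<lambda>t. c i * indicator ({0..v} \<inter> Iv n i) t)" for i
      by (intro integrable_mult_right integrable_real_indicator emeasure_bounded_finite) (auto simp: Iv_bounded)
  qed
  also have "\<dots> = (\<Sum>i\<in>{1..n}. c i * LL n i v)"
    by (simp add: LL_def)
  finally show ?thesis unfolding c_def .
qed


lemma Times_borel:
  fixes A :: "'a::second_countable_topology set" and B :: "'b::second_countable_topology set"
  shows "A \<in> sets borel \<Longrightarrow> B \<in> sets borel \<Longrightarrow> A \<times> B \<in> sets borel"
  by (metis borel_prod pair_measureI)

lemma emp_density_Iv:
  "emp_density n s1 s2 a b c = real n ^ 2 * (\<Sum>i\<in>{1..n}.
     indicator (Iv n (s1 i)) a * indicator (Iv n (s2 i)) b * indicator (Iv n i) c)"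
  by (simp add: emp_density_def Iv_def)

lemma EC:
  assumes "n \<ge> 1"
  shows "emp_copula n s1 s2 u1 u2 v
       = (\<Sum>i\<in>{1..n}. real n ^ 2 * LL n (s1 i) u1 * LL n (s2 i) u2 * LL n i v)"
proof -
  define T where "T i = ({0..u1} \<inter> Iv n (s1 i)) \<times> ({0..u2} \<inter> Iv n (s2 i)) \<times> ({0..v} \<inter> Iv n i)" for i
  have T_sets: "T i \<in> sets borel" for i
    unfolding T_def by (intro Times_borel) auto
  have T_fin: "emeasure lborel (T i) < top" for i
  proof -
    have "bounded (T i)" unfolding T_def by (intro bounded_Times bounded_Int) (auto simp: Iv_bounded)
    then show ?thesis using emeasure_bounded_finite by simp
  qed
  have "emp_copula n s1 s2 u1 u2 v = (LINT x|lborel. (\<Sum>i\<in>{1..n}. real n ^ 2 * indicator (T i) x))"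
    unfolding emp_copula_def set_lebesgue_integral_def
  proof (intro Bochner_Integration.integral_cong refl)
    fix x :: "real \<times> real \<times> real"
    obtain a b c where x: "x = (a, b, c)" by (cases x) auto
    show "indicator ({0..u1} \<times> {0..u2} \<times> {0..v}) x *\<^sub>R emp_density n s1 s2 (fst x) (fst (snd x)) (snd (snd x))
        = (\<Sum>i\<in>{1..n}. real n ^ 2 * indicator (T i) x)"
      unfolding x emp_density_Iv T_def real_scaleR_def sum_distrib_left indicator_times fst_conv snd_conv
        indicator_inter_arith
      by (rule sum.cong) (simp_all add: mult_ac)
  qed
  also have "\<dots> = (\<Sum>i\<in>{1..n}. (LINT x|lborel. real n ^ 2 * indicator (T i) x))"
    by (rule Bochner_Integration.integral_sum)
       (intro integrable_mult_right integrable_real_indicator, auto simp: T_sets intro: T_fin)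
  also have "\<dots> = (\<Sum>i\<in>{1..n}. real n ^ 2 * measure lborel (T i))"
    using T_sets by simp
  also have "\<dots> = (\<Sum>i\<in>{1..n}. real n ^ 2 * LL n (s1 i) u1 * LL n (s2 i) u2 * LL n i v)"
  proof (rule sum.cong)
    fix i
    have "measure lborel (T i) = LL n (s1 i) u1 * (LL n (s2 i) u2 * LL n i v)"
      unfolding T_def LL_def
      by (subst measure_lborel_Times, simp, intro Times_borel, simp, simp,
          subst measure_lborel_Times, simp_all)
    then show "real n ^ 2 * measure lborel (T i) = real n ^ 2 * LL n (s1 i) u1 * LL n (s2 i) u2 * LL n i v"
      by (simp add: mult_ac)
  qed simp
  finally show ?thesis .
qed


theorem theorem3p6:
  fixes n :: nat and s1 s2 :: "nat \<Rightarrow> nat"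
  assumes "n \<ge> 1"
    and "bij_betw s1 {1..n} {1..n}"
    and "bij_betw s2 {1..n} {1..n}"
  shows "simplified3 (emp_copula n s1 s2)"
proof -
  have n1: "n \<ge> 1" by fact
  have s1r: "s1 i \<in> {1..n}" if "i \<in> {1..n}" for i
    using assms(2) that by (rule bij_betw_apply)
  have s2r: "s2 i \<in> {1..n}" if "i \<in> {1..n}" for i
    using assms(3) that by (rule bij_betw_apply)
  define K where "K = KK n s1 s2"
  have KQ: "measure (K t) ({0..u1} \<times> {0..u2}) = real n ^ 2 * LL n (s1 (jj n t)) u1 * LL n (s2 (jj n t)) u2"
    for t u1 u2
    unfolding K_def KK_def by (rule measure_Kd[OF n1])
  have main: "emp_copula n s1 s2 u1 u2 v = (LINT t:{0..v}|lborel. measure (K t) ({0..u1} \<times> {0..u2}))"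
    if "v \<in> {0..1}" for u1 u2 v
    using that unfolding K_def by (simp add: EC[OF n1] RC[OF n1])
  have cd13: "cond_df13 K u t = real n * LL n (s1 (jj n t)) u" for u t
  proof -
    have "cond_df13 K u t = real n ^ 2 * LL n (s1 (jj n t)) u * LL n (s2 (jj n t)) 1"
      unfolding cond_df13_def by (rule KQ)
    also have "LL n (s2 (jj n t)) 1 = 1 / real n"
      using s2r[OF jj_range[OF n1]] by (intro LL_1) auto
    finally show ?thesis by (simp add: power2_eq_square)
  qed
  have cd23: "cond_df23 K u t = real n * LL n (s2 (jj n t)) u" for u t
  proof -
    have "cond_df23 K u t = real n ^ 2 * LL n (s1 (jj n t)) 1 * LL n (s2 (jj n t)) u"
      unfolding cond_df23_def by (rule KQ)
    also have "LL n (s1 (jj n t)) 1 = 1 / real n"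
      using s1r[OF jj_range[OF n1]] by (intro LL_1) auto
    finally show ?thesis by (simp add: power2_eq_square)
  qed
  have mk: "markov_kernel3 (emp_copula n s1 s2) K"
    unfolding markov_kernel3_def
  proof (intro conjI allI ballI)
    fix t
    show "prob_space (K t)" unfolding K_def KK_def by (rule prob_Kd[OF n1])
    show "sets (K t) = sets borel" unfolding K_def KK_def Kd_def by simp
  next
    fix B :: "(real \<times> real) set"
    show "(\<lambda>t. measure (K t) B) \<in> borel_measurable borel" unfolding K_def by (rule KK_meas)
  next
    fix u1 u2 v :: real
    assume "v \<in> {0..1}"
    then show "emp_copula n s1 s2 u1 u2 v = (LINT t:{0..v}|lborel. measure (K t) ({0..u1} \<times> {0..u2}))"
      by (rule main)
  qed
  have cop: "copula2 (\<lambda>x y. x * y)"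
    unfolding copula2_def
  proof (intro conjI ballI impI)
    fix u1 u2 v1 v2 :: real
    assume "u1 \<le> u2" "v1 \<le> v2"
    then have "0 \<le> (u2 - u1) * (v2 - v1)" by simp
    then show "0 \<le> u2 * v2 - u1 * v2 - u2 * v1 + u1 * v1" by (simp add: algebra_simps)
  qed auto
  have gs: "gen_simplified_wrt (emp_copula n s1 s2) K"
    unfolding gen_simplified_wrt_def
  proof (intro exI[of _ "\<lambda>x y. x * y"] conjI cop ballI)
    fix u1 u2 v :: real
    assume "v \<in> {0..1}"
    then have "emp_copula n s1 s2 u1 u2 v = (LINT t:{0..v}|lborel. measure (K t) ({0..u1} \<times> {0..u2}))"
      by (rule main)
    also have "(\<lambda>t. measure (K t) ({0..u1} \<times> {0..u2})) = (\<lambda>t. cond_df13 K u1 t * cond_df23 K u2 t)"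
      by (rule ext) (simp add: KQ cd13 cd23 power2_eq_square)
    finally show "emp_copula n s1 s2 u1 u2 v = (LINT t:{0..v}|lborel. cond_df13 K u1 t * cond_df23 K u2 t)" .
  qed
  have cont: "continuous_on {0..1} (\<lambda>u. cond_df13 K u t) \<and> continuous_on {0..1} (\<lambda>u. cond_df23 K u t)" for t
  proof
    have k1: "1 \<le> s1 (jj n t)" using s1r[OF jj_range[OF n1]] by simp
    have k2: "1 \<le> s2 (jj n t)" using s2r[OF jj_range[OF n1]] by simp
    show "continuous_on {0..1} (\<lambda>u. cond_df13 K u t)"
    proof (rule continuous_on_eq[where f="(\<lambda>u. real n * max 0 (min u (real (s1 (jj n t)) / real n) - (real (s1 (jj n t)) - 1) / real n))"])
      show "continuous_on {0..1} (\<lambda>u. real n * max 0 (min u (real (s1 (jj n t)) / real n) - (real (s1 (jj n t)) - 1) / real n))"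
        by (intro continuous_intros)
      show "(\<lambda>u. real n * max 0 (min u (real (s1 (jj n t)) / real n) - (real (s1 (jj n t)) - 1) / real n)) u = cond_df13 K u t" if "u \<in> {0..1}" for u
        using that k1 n1 by (simp add: cd13 LL_def len)
    qed
    show "continuous_on {0..1} (\<lambda>u. cond_df23 K u t)"
    proof (rule continuous_on_eq[where f="(\<lambda>u. real n * max 0 (min u (real (s2 (jj n t)) / real n) - (real (s2 (jj n t)) - 1) / real n))"])
      show "continuous_on {0..1} (\<lambda>u. real n * max 0 (min u (real (s2 (jj n t)) / real n) - (real (s2 (jj n t)) - 1) / real n))"
        by (intro continuous_intros)
      show "(\<lambda>u. real n * max 0 (min u (real (s2 (jj n t)) / real n) - (real (s2 (jj n t)) - 1) / real n)) u = cond_df23 K u t" if "u \<in> {0..1}" for u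
        using that k2 n1 by (simp add: cd23 LL_def len)
    qed
  qed
  show ?thesis
    unfolding simplified3_def
    by (intro exI[of _ K] conjI mk gs) (simp add: cont)
qed

end
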